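(* Consider the composite online convex optimization setting in the context, suppose all items of the Regularity Assumption hold, that $\mathcal{A}$ is a Euclidean space with the 2-norm $\|\cdot\|_2$ and $h(x)=\frac12\|x\|_2^2$ (so $\mathbb{B}_h(x,y)=\frac12\|x-y\|_2^2$), that perfect function predictions are available ($\hat{r}_t=r_t$ for all $t$), and that each $s_t$ is $\alpha$-strongly convex. Run OptCMD with $\hat{r}_t=r_t$: starting from some $y_0\in\mathbb{X}$, for $t=1,\dots,T$, $$x_t=\arg\min_{x\in\mathbb{X}}\big\{\eta_t\langle\nabla\hat{s}_t(y_{t-1}),x\rangle+\eta_t r_t(x)+\mathbb{B}_h(x,y_{t-1})\big\},\qquad y_t=\arg\min_{y\in\mathbb{X}}\big\{\eta_t\langle\nabla s_t(x_t),y\rangle+\eta_t r_t(y)+\mathbb{B}_h(y,y_{t-1})\big\},$$ with $\eta_1=\frac{1}{2\beta}$ and $\eta_t=\big(2\beta+\frac{\alpha}{2\sigma^2}D'_{t-1}\big)^{-1}$ for $t>1$. Then $$\mathbf{Reg}^s_T\le O\big(1+\log(1+D'_T)\big),$$ where $O(\cdot)$ hides constants not depending on $T$.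
   Context: Let $\mathcal{A}$ be a Banach space with norm $\|\cdot\|$ and dual norm $\|\cdot\|_*$. Bregman divergence: $\mathbb{B}_h(x,y)=h(x)-h(y)-\langle\nabla h(y),x-y\rangle$. $f$ is $\beta$-smooth if differentiable with $\|\nabla f(x)-\nabla f(y)\|_*\le\beta\|x-y\|$; $f$ is $\alpha$-strongly convex w.r.t. $\|\cdot\|$ if $f(x)-f(y)\le\langle\nabla f(x),x-y\rangle-\frac{\alpha}{2}\|x-y\|^2$ for all $x,y\in\mathbb{X}$. At each round $t=1,\dots,T$ the player picks $x_t\in\mathbb{X}$ and incurs $f_t=s_t+r_t$; before choosing $x_t$ it has a gradient prediction $\nabla\hat{s}_t$ of $\nabla s_t$ and a function prediction $\hat{r}_t$ of $r_t$. Regularity Assumption: (i) $\mathbb{X}\subseteq\mathcal{A}$ convex; (ii) $h$ differentiable and 1-strongly convex on $\mathbb{X}$; (iii) each $s_t$ convex and $\beta$-smooth, each $r_t$ convex; (iv) $\mathbb{B}_h(x,y)\le R^2$ for all $x,y\in\mathbb{X}$, some $R>0$; (v) $\|\nabla s_t(x)-\nabla\hat{s}_t(x)\|_*\le\sigma<\infty$ for all $t$, $x\in\mathbb{X}$; (vi) each $\hat{r}_t$ convex with $|r_t(x)-\hat{r}_t(x)|<\infty$. Gradient prediction error: $D'_t=\sum_{\tau=1}^t\|\nabla s_\tau(y_{\tau-1})-\nabla\hat{s}_\tau(y_{\tau-1})\|_*^2$. Static regret: $\mathbf{Reg}^s_T=\sum_{t=1}^T f_t(x_t)-\min_{x\in\mathbb{X}}\sum_{t=1}^T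 f_t(x)$. *)

theory Defs
  imports "HOL-Analysis.Analysis"
begin

text \<open>Euclidean setting: h(x) = 1/2 ||x||^2, so B_h(x,y) = 1/2 ||x - y||^2.\<close>
definition breg :: "'a::euclidean_space \<Rightarrow> 'a \<Rightarrow> real" where
  "breg x y = (1/2) * (norm (x - y))^2"

text \<open>beta-smoothness: differentiable with gradient g and g is beta-Lipschitz (2-norm is self-dual).\<close>
definition smooth_grad :: "real \<Rightarrow> ('a::euclidean_space \<Rightarrow> real) \<Rightarrow> ('a \<Rightarrow> 'a) \<Rightarrow> bool" where
  "smooth_grad \<beta> f g \<longleftrightarrow>
     (\<forall>x. (f has_derivative (\<lambda>v. g x \<bullet> v)) (at x)) \<and>
     (\<forall>x y. norm (g x - g y) \<le> \<beta> * norm (x - y))"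

definition strongly_convex_grad :: "real \<Rightarrow> 'a::euclidean_space set \<Rightarrow> ('a \<Rightarrow> real) \<Rightarrow> ('a \<Rightarrow> 'a) \<Rightarrow> bool" where
  "strongly_convex_grad \<alpha> X f g \<longleftrightarrow>
     (\<forall>x\<in>X. \<forall>y\<in>X. f x - f y \<le> g x \<bullet> (x - y) - (\<alpha>/2) * (norm (x - y))^2)"

definition is_argmin_on :: "'a set \<Rightarrow> ('a \<Rightarrow> real) \<Rightarrow> 'a \<Rightarrow> bool" where
  "is_argmin_on X F z \<longleftrightarrow> z \<in> X \<and> (\<forall>w\<in>X. F z \<le> F w)"

definition Dprime :: "(nat \<Rightarrow> 'a::euclidean_space \<Rightarrow> 'a) \<Rightarrow> (nat \<Rightarrow> 'a \<Rightarrow> 'a) \<Rightarrow> (nat \<Rightarrow> 'a) \<Rightarrow> nat \<Rightarrow> real" where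
  "Dprime gs gsh y t = (\<Sum>\<tau>=1..t. (norm (gs \<tau> (y (\<tau>-1)) - gsh \<tau> (y (\<tau>-1))))^2)"

definition eta :: "real \<Rightarrow> real \<Rightarrow> real \<Rightarrow> (nat \<Rightarrow> 'a::euclidean_space \<Rightarrow> 'a) \<Rightarrow> (nat \<Rightarrow> 'a \<Rightarrow> 'a) \<Rightarrow> (nat \<Rightarrow> 'a) \<Rightarrow> nat \<Rightarrow> real" where
  "eta \<alpha> \<beta> \<sigma> gs gsh y t =
     (if t = 1 then 1 / (2 * \<beta>)
      else 1 / (2 * \<beta> + \<alpha> / (2 * \<sigma>^2) * Dprime gs gsh y (t - 1)))"

definition optcmd_run ::
  "'a::euclidean_space set \<Rightarrow> real \<Rightarrow> real \<Rightarrow> real \<Rightarrow> (nat \<Rightarrow> 'a \<Rightarrow> real) \<Rightarrow> (nat \<Rightarrow> 'a \<Rightarrow> 'a) \<Rightarrow> (nat \<Rightarrow> 'a \<Rightarrow> 'a)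
    \<Rightarrow> (nat \<Rightarrow> 'a) \<Rightarrow> (nat \<Rightarrow> 'a) \<Rightarrow> nat \<Rightarrow> bool" where
  "optcmd_run X \<alpha> \<beta> \<sigma> r gs gsh x y T \<longleftrightarrow>
     y 0 \<in> X \<and>
     (\<forall>t\<in>{1..T}.
        is_argmin_on X (\<lambda>z. eta \<alpha> \<beta> \<sigma> gs gsh y t * (gsh t (y (t-1)) \<bullet> z)
                              + eta \<alpha> \<beta> \<sigma> gs gsh y t * r t z + breg z (y (t-1))) (x t) \<and>
        is_argmin_on X (\<lambda>z. eta \<alpha> \<beta> \<sigma> gs gsh y t * (gs t (x t) \<bullet> z)
                              + eta \<alpha> \<beta> \<sigma> gs gsh y t * r t z + breg z (y (t-1))) (y t))"

end

theory Submission
  imports Defs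
begin

lemma norm_comb_id:
  fixes a b :: "'a::euclidean_space"
  shows "(norm ((1-l) *\<^sub>R a + l *\<^sub>R b))^2 = (1-l)*(norm a)^2 + l*(norm b)^2 - l*(1-l)*(norm (b - a))^2"
  unfolding power2_norm_eq_inner
  by (simp only: inner_add_left inner_add_right inner_diff_left inner_diff_right inner_scaleR_left inner_scaleR_right inner_commute[of b a]) (simp add: algebra_simps)

lemma three_point:
  fixes g y x u :: "'a::euclidean_space"
  assumes X: "convex X" and r: "convex_on X r" and eta: "\<eta> > 0"
    and am: "is_argmin_on X (\<lambda>z. \<eta> * (g \<bullet> z) + \<eta> * r z + breg z y) x" and u: "u \<in> X"
  shows "\<eta> * (g \<bullet> (x - u)) + \<eta> * (r x - r u) \<le> breg u y - breg u x - breg x y"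
proof -
  define F where "F = (\<lambda>z. \<eta> * (g \<bullet> z) + \<eta> * r z + breg z y)"
  have xX: "x \<in> X" and min: "\<And>w. w \<in> X \<Longrightarrow> F x \<le> F w" using am unfolding is_argmin_on_def F_def by auto
  define N where "N = (norm (u - x))^2"
  have key: "F u - F x - N/2 \<ge> - l * N / 2" if l: "0 < l" "l < 1" for l
  proof -
    define xl where "xl = (1-l) *\<^sub>R x + l *\<^sub>R u"
    have "xl \<in> X" unfolding xl_def by (rule convexD[OF X xX u]) (use l in auto)
    hence m: "F x \<le> F xl" by (rule min)
    have rc: "r xl \<le> (1-l) * r x + l * r u"
      unfolding xl_def by (rule convex_onD[OF r]) (use l xX u in auto)
    have lin: "g \<bullet> xl = (1-l) * (g \<bullet> x) + l * (g \<bullet> u)"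
      unfolding xl_def by (simp add: inner_add_right)
    have q: "xl - y = (1-l) *\<^sub>R (x - y) + l *\<^sub>R (u - y)" unfolding xl_def by (simp add: algebra_simps)
    have bq: "breg xl y = (1-l) * breg x y + l * breg u y - l*(1-l)*N/2"
      unfolding breg_def q norm_comb_id N_def by (simp add: field_simps)
    have rc2: "\<eta> * r xl \<le> \<eta> * ((1-l) * r x + l * r u)" using rc eta by (simp add: mult_left_mono)
    have "F xl = \<eta> * ((1-l) * (g \<bullet> x) + l * (g \<bullet> u)) + \<eta> * r xl + ((1-l) * breg x y + l * breg u y - l*(1-l)*N/2)"
      unfolding F_def lin bq by simp
    also have "\<dots> \<le> \<eta> * ((1-l) * (g \<bullet> x) + l * (g \<bullet> u)) + \<eta> * ((1-l) * r x + l * r u) + ((1-l) * breg x y + l * breg u y - l*(1-l)*N/2)"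
      using rc2 by linarith
    also have "\<dots> = (1-l) * F x + l * F u - l*(1-l)*N/2"
      unfolding F_def by (simp add: algebra_simps)
    finally have "F xl \<le> (1-l) * F x + l * F u - l*(1-l)*N/2" .
    with m have "l * (F x - (F u - (1-l)*N/2)) \<le> 0" by (simp add: algebra_simps)
    hence "F x - (F u - (1-l)*N/2) \<le> 0" using l by (simp add: mult_le_0_iff)
    moreover have "(1-l)*N/2 = N/2 - l*N/2" by (simp add: field_simps)
    ultimately show ?thesis by linarith
  qed
  have N0: "N \<ge> 0" unfolding N_def by simp
  have "F u - F x - N/2 \<ge> 0"
  proof (rule ccontr)
    assume a: "\<not> ?thesis"
    show False
    proof (cases "N = 0")
      case True with key[of "1/2"] a show False by simp
    next
      case False
      hence Np: "N > 0" using N0 by simp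
      define l where "l = min (1/2) (- (F u - F x - N/2) / N)"
      have l0: "0 < l" "l < 1" using a Np unfolding l_def by auto
      have "l \<le> - (F u - F x - N/2) / N" unfolding l_def by simp
      hence "l * N \<le> - (F u - F x - N/2)" using Np by (simp add: pos_le_divide_eq)
      with key[OF l0] a show False by simp
    qed
  qed
  thus ?thesis unfolding F_def N_def breg_def by (simp add: inner_diff_right norm_minus_commute algebra_simps)
qed

lemma round_bound:
  fixes G Gp gh yp xt yt u :: "'a::euclidean_space"
  assumes X: "convex X" and r: "convex_on X r" and w: "w \<ge> 2 * \<beta>" and \<beta>: "\<beta> > 0" and \<alpha>: "\<alpha> > 0"
    and \<sigma>: "\<sigma> > 0" and u: "u \<in> X"
    and amx: "is_argmin_on X (\<lambda>z. (1/w) * (gh \<bullet> z) + (1/w) * r z + breg z yp) xt"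
    and amy: "is_argmin_on X (\<lambda>z. (1/w) * (G \<bullet> z) + (1/w) * r z + breg z yp) yt"
    and sc: "s xt - s u \<le> G \<bullet> (xt - u) - (\<alpha>/2) * (norm (xt - u))^2"
    and lip: "norm (G - Gp) \<le> \<beta> * norm (xt - yp)"
    and e: "e = norm (Gp - gh)" and es: "e \<le> \<sigma>"
    and ab: "\<alpha> \<le> \<beta> \<or> xt = yt"
  shows "s xt + r xt - (s u + r u) \<le> 2 * e^2 / w + w/2 * (norm (u - yp))^2
           - (w + \<alpha> / (2 * \<sigma>^2) * e^2) / 2 * (norm (u - yt))^2"
proof -
  define \<eta> where "\<eta> = 1 / w"
  have wp: "w > 0" using w \<beta> by simp
  have \<eta>p: "\<eta> > 0" using wp unfolding \<eta>_def by simp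
  have \<eta>w: "\<eta> * w = 1" using wp unfolding \<eta>_def by simp
  have \<eta>\<beta>: "2 * \<eta> * \<beta> \<le> 1" using w wp \<beta> unfolding \<eta>_def by (simp add: field_simps)
  have xt: "xt \<in> X" using amx unfolding is_argmin_on_def by simp
  have yt: "yt \<in> X" using amy unfolding is_argmin_on_def by simp
  have T1: "\<eta> * (G \<bullet> (yt - u)) + \<eta> * (r yt - r u) \<le> breg u yp - breg u yt - breg yt yp"
    by (rule three_point[OF X r \<eta>p _ u]) (use amy in \<open>simp add: \<eta>_def\<close>)
  have T2: "\<eta> * (gh \<bullet> (xt - yt)) + \<eta> * (r xt - r yt) \<le> breg yt yp - breg yt xt - breg xt yp"
    by (rule three_point[OF X r \<eta>p _ yt]) (use amx in \<open>simp add: \<eta>_def\<close>)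
  define a where "a = norm (xt - yp)"
  define b where "b = norm (xt - yt)"
  define du where "du = norm (u - yp)"
  define dt where "dt = norm (u - yt)"
  define cu where "cu = norm (xt - u)"
  have a0: "a \<ge> 0" and b0: "b \<ge> 0" unfolding a_def b_def by auto
  have e0: "e \<ge> 0" unfolding e by simp
  have split: "G \<bullet> (xt - u) = G \<bullet> (yt - u) + G \<bullet> (xt - yt)" by (simp add: inner_diff_right)
  have B1: "breg u yp = du^2/2" "breg u yt = dt^2/2" "breg yt xt = b^2/2" "breg xt yp = a^2/2"
    unfolding breg_def du_def dt_def b_def a_def by (simp_all add: norm_minus_commute)
  have S: "\<eta> * (G \<bullet> (xt - u) + r xt - r u) \<le> \<eta> * ((G - gh) \<bullet> (xt - yt))
      + du^2/2 - dt^2/2 - b^2/2 - a^2/2"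
  proof -
    have e1: "\<eta> * (G \<bullet> (xt - u) + r xt - r u) = \<eta> * (G \<bullet> (yt - u)) + \<eta> * (r yt - r u)
       + (\<eta> * (gh \<bullet> (xt - yt)) + \<eta> * (r xt - r yt)) + \<eta> * ((G - gh) \<bullet> (xt - yt))"
      by (simp add: inner_diff_left inner_diff_right algebra_simps)
    show ?thesis unfolding e1 using T1 T2 B1 by linarith
  qed
  have n1: "norm (G - gh) \<le> \<beta> * a + e"
  proof -
    have "G - gh = (G - Gp) + (Gp - gh)" by simp
    hence "norm (G - gh) \<le> norm (G - Gp) + norm (Gp - gh)" by (metis norm_triangle_ineq)
    thus ?thesis using lip unfolding a_def e by simp
  qed
  have CS: "(G - gh) \<bullet> (xt - yt) \<le> (\<beta> * a + e) * b"
  proof -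
    have "(G - gh) \<bullet> (xt - yt) \<le> norm (G - gh) * b" unfolding b_def by (rule norm_cauchy_schwarz)
    also have "\<dots> \<le> (\<beta> * a + e) * b" using n1 b0 by (rule mult_right_mono)
    finally show ?thesis .
  qed
  have AM: "\<eta> * ((\<beta> * a + e) * b) \<le> \<eta>^2 * (\<beta> * a + e)^2 + b^2/4"
  proof -
    have "0 \<le> (\<eta> * (\<beta> * a + e) - b/2)^2" by simp
    thus ?thesis by (simp add: power2_eq_square algebra_simps)
  qed
  have sq: "(\<beta> * a + e)^2 \<le> 2 * \<beta>^2 * a^2 + 2 * e^2"
  proof -
    have "0 \<le> (\<beta> * a - e)^2" by simp
    thus ?thesis by (simp add: power2_eq_square algebra_simps)
  qed
  have eb: "\<eta>^2 * (2 * \<beta>^2 * a^2) \<le> a^2/2"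
  proof -
    have "(2 * \<eta> * \<beta>)^2 \<le> 1" using \<eta>\<beta> \<eta>p \<beta> by (simp add: power_le_one)
    hence "(2 * \<eta> * \<beta>)^2 * a^2 \<le> a^2" by (simp add: mult_left_le_one_le)
    thus ?thesis by (simp add: power2_eq_square algebra_simps)
  qed
  have S2: "\<eta> * (G \<bullet> (xt - u) + r xt - r u) \<le> 2 * \<eta>^2 * e^2 + du^2/2 - dt^2/2 - b^2/4"
  proof -
    have "\<eta> * ((G - gh) \<bullet> (xt - yt)) \<le> \<eta> * ((\<beta> * a + e) * b)" using CS \<eta>p by simp
    moreover have "\<eta>^2 * (\<beta> * a + e)^2 \<le> \<eta>^2 * (2 * \<beta>^2 * a^2 + 2 * e^2)" using sq by (simp add: mult_left_mono)
    ultimately show ?thesis using S AM eb by (simp add: algebra_simps)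
  qed
  have S3: "G \<bullet> (xt - u) + r xt - r u \<le> 2 * e^2 / w + w/2 * du^2 - w/2 * dt^2 - w * b^2/4"
  proof -
    have "w * (\<eta> * (G \<bullet> (xt - u) + r xt - r u)) \<le> w * (2 * \<eta>^2 * e^2 + du^2/2 - dt^2/2 - b^2/4)"
      using S2 wp by simp
    moreover have "w * (\<eta> * (G \<bullet> (xt - u) + r xt - r u)) = G \<bullet> (xt - u) + r xt - r u"
      using \<eta>w by (metis mult.assoc mult.commute mult_1)
    moreover have "w * (2 * \<eta>^2 * e^2 + du^2/2 - dt^2/2 - b^2/4) = 2 * e^2 / w + w/2 * du^2 - w/2 * dt^2 - w * b^2/4"
      unfolding \<eta>_def using wp by (simp add: field_simps power2_eq_square)
    ultimately show ?thesis by simp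
  qed
  define \<kappa> where "\<kappa> = \<alpha> / (2 * \<sigma>^2)"
  have ke: "\<kappa> * e^2 \<le> \<alpha> / 2"
  proof -
    have "e^2 \<le> \<sigma>^2" using es e0 by (simp add: power_mono)
    hence "\<alpha> * e^2 \<le> \<alpha> * \<sigma>^2" using \<alpha> by simp
    thus ?thesis unfolding \<kappa>_def using \<sigma> by (simp add: field_simps)
  qed
  have k0: "\<kappa> * e^2 \<ge> 0" unfolding \<kappa>_def using \<alpha> by simp
  have dtb: "dt^2 \<le> 2 * cu^2 + 2 * b^2"
  proof -
    have "u - yt = (u - xt) + (xt - yt)" by simp
    hence "norm (u - yt) \<le> norm (u - xt) + norm (xt - yt)" by (metis norm_triangle_ineq)
    hence "dt \<le> cu + b" unfolding dt_def cu_def b_def by (simp add: norm_minus_commute)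
    hence "dt^2 \<le> (cu + b)^2" by (simp add: dt_def power_mono)
    moreover have "0 \<le> (cu - b)^2" by simp
    ultimately show ?thesis by (simp add: power2_eq_square algebra_simps)
  qed
  have last: "\<kappa> * e^2 / 2 * dt^2 \<le> w * b^2/4 + \<alpha>/2 * cu^2"
  proof -
    have "\<kappa> * e^2 / 2 \<le> \<alpha> / 4" using ke by simp
    hence "\<kappa> * e^2 / 2 * dt^2 \<le> \<alpha> / 4 * dt^2" by (rule mult_right_mono) simp
    also have "\<dots> \<le> \<alpha>/4 * (2 * cu^2 + 2 * b^2)" using dtb \<alpha> by (intro mult_left_mono) simp_all
    also have "\<dots> = \<alpha>/2 * cu^2 + \<alpha>/2 * b^2" by (simp add: field_simps)
    also have "\<alpha>/2 * b^2 \<le> w * b^2/4"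
    proof (cases "xt = yt")
      case True thus ?thesis unfolding b_def by simp
    next
      case False hence "\<alpha> \<le> \<beta>" using ab by simp
      hence "2 * \<alpha> \<le> w" using w by simp
      hence "2 * \<alpha> * b^2 \<le> w * b^2" by (rule mult_right_mono) simp
      thus ?thesis by simp
    qed
    finally show ?thesis by simp
  qed
  have eqd: "(w + \<alpha> / (2 * \<sigma>^2) * e^2) / 2 * dt^2 = w/2 * dt^2 + \<kappa> * e^2 / 2 * dt^2"
    unfolding \<kappa>_def by (simp add: field_simps)
  have sc': "s xt - s u \<le> G \<bullet> (xt - u) - (\<alpha>/2) * cu^2" using sc unfolding cu_def .
  show ?thesis unfolding du_def[symmetric] dt_def[symmetric] eqd using S3 sc' last by linarith
qed

lemma log_step:
  fixes D0 \<Delta> \<beta> \<kappa> \<sigma> :: real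
  assumes D0: "D0 \<ge> 0" and d0: "0 \<le> \<Delta>" and ds: "\<Delta> \<le> \<sigma>^2" and \<beta>: "\<beta> > 0" and \<kappa>: "\<kappa> > 0"
  shows "2 * \<Delta> / (2 * \<beta> + \<kappa> * D0) \<le> (2 / min (2 * \<beta> / (1 + \<sigma>^2)) \<kappa>) * (ln (1 + (D0 + \<Delta>)) - ln (1 + D0))"
proof -
  define k where "k = min (2 * \<beta> / (1 + \<sigma>^2)) \<kappa>"
  have kp: "k > 0" unfolding k_def using \<beta> \<kappa> by (simp add: add_pos_nonneg)
  have k1: "k * (1 + \<sigma>^2) \<le> 2 * \<beta>"
  proof -
    have "k \<le> 2 * \<beta> / (1 + \<sigma>^2)" unfolding k_def by simp
    thus ?thesis by (simp add: pos_le_divide_eq add_pos_nonneg)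
  qed
  have k2: "k * D0 \<le> \<kappa> * D0" using D0 unfolding k_def by (simp add: mult_right_mono)
  have W: "k * (1 + D0 + \<Delta>) \<le> 2 * \<beta> + \<kappa> * D0"
  proof -
    have "k * \<Delta> \<le> k * \<sigma>^2" using ds kp by simp
    thus ?thesis using k1 k2 by (simp add: algebra_simps)
  qed
  have Bp: "1 + D0 + \<Delta> > 0" using D0 d0 by simp
  have Ap: "1 + D0 > 0" using D0 by simp
  have step1: "2 * \<Delta> / (2 * \<beta> + \<kappa> * D0) \<le> 2 * \<Delta> / (k * (1 + D0 + \<Delta>))"
  proof -
    have Kp: "0 < k * (1 + D0 + \<Delta>)" using kp Bp by simp
    have Wp: "0 < 2 * \<beta> + \<kappa> * D0" using W Kp by linarith
    show ?thesis by (rule divide_left_mono) (use W d0 Kp Wp in simp_all)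
  qed
  have lnb: "\<Delta> / (1 + D0 + \<Delta>) \<le> ln (1 + (D0 + \<Delta>)) - ln (1 + D0)"
  proof -
    have "ln ((1 + D0) / (1 + D0 + \<Delta>)) \<le> (1 + D0) / (1 + D0 + \<Delta>) - 1"
      by (rule ln_le_minus_one) (use Ap Bp in simp)
    moreover have "ln ((1 + D0) / (1 + D0 + \<Delta>)) = ln (1 + D0) - ln (1 + (D0 + \<Delta>))"
      using Ap Bp by (simp add: ln_div add.assoc)
    moreover have "(1 + D0) / (1 + D0 + \<Delta>) - 1 = - (\<Delta> / (1 + D0 + \<Delta>))"
      using Bp by (simp add: field_simps)
    ultimately show ?thesis by simp
  qed
  have "2 * \<Delta> / (k * (1 + D0 + \<Delta>)) = (2 / k) * (\<Delta> / (1 + D0 + \<Delta>))" by simp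
  also have "\<dots> \<le> (2 / k) * (ln (1 + (D0 + \<Delta>)) - ln (1 + D0))"
    using lnb kp by (intro mult_left_mono) simp_all
  finally show ?thesis using step1 unfolding k_def by simp
qed

lemma Dprime_0: "Dprime gs gsh y 0 = 0" unfolding Dprime_def by simp
lemma Dprime_Suc: "Dprime gs gsh y (Suc n) = Dprime gs gsh y n + (norm (gs (Suc n) (y n) - gsh (Suc n) (y n)))^2"
  unfolding Dprime_def by simp
lemma Dprime_nonneg: "Dprime gs gsh y n \<ge> 0" unfolding Dprime_def by (simp add: sum_nonneg)
lemma eta_eq: "eta \<alpha> \<beta> \<sigma> gs gsh y t = 1 / (2 * \<beta> + \<alpha> / (2 * \<sigma>^2) * Dprime gs gsh y (t - 1))"
  unfolding eta_def by (simp add: Dprime_0)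

theorem theorem2:
  fixes \<alpha> \<beta> \<sigma> R :: real
  assumes "\<alpha> > 0" and "\<beta> > 0" and "\<sigma> > 0" and "R > 0"
  shows "\<exists>C::real. \<forall>(X::'a::euclidean_space set) (s::nat \<Rightarrow> 'a \<Rightarrow> real) (r::nat \<Rightarrow> 'a \<Rightarrow> real)
           (gs::nat \<Rightarrow> 'a \<Rightarrow> 'a) (gsh::nat \<Rightarrow> 'a \<Rightarrow> 'a) (x::nat \<Rightarrow> 'a) (y::nat \<Rightarrow> 'a) (T::nat).
     convex X \<longrightarrow>
     (\<forall>t. convex_on X (s t) \<and> smooth_grad \<beta> (s t) (gs t) \<and> strongly_convex_grad \<alpha> X (s t) (gs t)) \<longrightarrow>
     (\<forall>t. convex_on X (r t)) \<longrightarrow>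
     (\<forall>u\<in>X. \<forall>v\<in>X. breg u v \<le> R^2) \<longrightarrow>
     (\<forall>t. \<forall>z\<in>X. norm (gs t z - gsh t z) \<le> \<sigma>) \<longrightarrow>
     optcmd_run X \<alpha> \<beta> \<sigma> r gs gsh x y T \<longrightarrow>
     (\<forall>u\<in>X. (\<Sum>t=1..T. s t (x t) + r t (x t)) - (\<Sum>t=1..T. s t u + r t u)
              \<le> C * (1 + ln (1 + Dprime gs gsh y T)))"
proof -
  define \<kappa> where "\<kappa> = \<alpha> / (2 * \<sigma>^2)"
  define k where "k = min (2 * \<beta> / (1 + \<sigma>^2)) \<kappa>"
  have \<kappa>p: "\<kappa> > 0" unfolding \<kappa>_def using assms by simp
  have kp: "k > 0" unfolding k_def using assms \<kappa>p by (simp add: add_pos_nonneg)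
  show ?thesis
  proof (rule exI[of _ "2 * \<beta> * R^2 + 2 / k"], intro allI impI ballI)
    fix X :: "'a set" and s r :: "nat \<Rightarrow> 'a \<Rightarrow> real" and gs gsh :: "nat \<Rightarrow> 'a \<Rightarrow> 'a"
      and x y :: "nat \<Rightarrow> 'a" and T :: nat and u :: 'a
    assume X: "convex X"
      and sA: "\<forall>t. convex_on X (s t) \<and> smooth_grad \<beta> (s t) (gs t) \<and> strongly_convex_grad \<alpha> X (s t) (gs t)"
      and rA: "\<forall>t. convex_on X (r t)"
      and RA: "\<forall>u\<in>X. \<forall>v\<in>X. breg u v \<le> R^2"
      and \<sigma>A: "\<forall>t. \<forall>z\<in>X. norm (gs t z - gsh t z) \<le> \<sigma>"
      and run: "optcmd_run X \<alpha> \<beta> \<sigma> r gs gsh x y T"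
      and u: "u \<in> X"
    define D where "D = Dprime gs gsh y"
    define W where "W t = 2 * \<beta> + \<kappa> * D (t - 1)" for t
    define e where "e t = norm (gs t (y (t-1)) - gsh t (y (t-1)))" for t
    have etaW: "eta \<alpha> \<beta> \<sigma> gs gsh y t = 1 / W t" for t
      unfolding eta_eq W_def D_def \<kappa>_def ..
    have DS: "D (Suc n) = D n + (e (Suc n))^2" for n unfolding D_def e_def by (simp add: Dprime_Suc)
    have D0: "D n \<ge> 0" for n unfolding D_def by (rule Dprime_nonneg)
    have W1: "W 1 = 2 * \<beta>" unfolding W_def D_def by (simp add: Dprime_0)
    have Wge: "W t \<ge> 2 * \<beta>" for t unfolding W_def using \<kappa>p D0 by simp
    have y0: "y 0 \<in> X" using run unfolding optcmd_run_def by simp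
    have amx: "is_argmin_on X (\<lambda>z. (1 / W t) * (gsh t (y (t-1)) \<bullet> z) + (1 / W t) * r t z + breg z (y (t-1))) (x t)"
      and amy: "is_argmin_on X (\<lambda>z. (1 / W t) * (gs t (x t) \<bullet> z) + (1 / W t) * r t z + breg z (y (t-1))) (y t)"
      if "t \<in> {1..T}" for t
      using run that unfolding optcmd_run_def etaW by auto
    have yX: "y t \<in> X" if "t \<le> T" for t
    proof (cases "t = 0")
      case True thus ?thesis using y0 by simp
    next
      case False hence "t \<in> {1..T}" using that by simp
      from amy[OF this] show ?thesis unfolding is_argmin_on_def by simp
    qed
    have xX: "x t \<in> X" if "t \<in> {1..T}" for t using amx[OF that] unfolding is_argmin_on_def by simp
    have ab: "\<alpha> \<le> \<beta>" if "a \<in> X" "b \<in> X" "a \<noteq> b" for a b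
    proof -
      have sc: "strongly_convex_grad \<alpha> X (s 0) (gs 0)" and sm: "smooth_grad \<beta> (s 0) (gs 0)" using sA by auto
      have 1: "s 0 a - s 0 b \<le> gs 0 a \<bullet> (a - b) - (\<alpha>/2) * (norm (a - b))^2"
        using sc that unfolding strongly_convex_grad_def by blast
      have 2: "s 0 b - s 0 a \<le> gs 0 b \<bullet> (b - a) - (\<alpha>/2) * (norm (b - a))^2"
        using sc that unfolding strongly_convex_grad_def by blast
      have "\<alpha> * (norm (a - b))^2 \<le> (gs 0 a - gs 0 b) \<bullet> (a - b)"
        using 1 2 by (simp add: inner_diff_left inner_diff_right norm_minus_commute algebra_simps)
      also have "\<dots> \<le> norm (gs 0 a - gs 0 b) * norm (a - b)" by (rule norm_cauchy_schwarz)
      also have "\<dots> \<le> \<beta> * norm (a - b) * norm (a - b)"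
        using sm unfolding smooth_grad_def by (intro mult_right_mono) auto
      finally have "\<alpha> * (norm (a - b))^2 \<le> \<beta> * (norm (a - b))^2" by (simp add: power2_eq_square)
      moreover have "(norm (a - b))^2 > 0" using that by simp
      ultimately show ?thesis by simp
    qed
    define F where "F n = (\<Sum>t=1..n. (s t (x t) + r t (x t)) - (s t u + r t u))" for n
    have ind: "n \<le> T \<longrightarrow> F n \<le> W 1 / 2 * (norm (u - y 0))^2 + (2 / k) * ln (1 + D n)
                 - W (Suc n) / 2 * (norm (u - y n))^2" for n
    proof (induction n)
      case 0
      show ?case unfolding F_def W_def D_def by (simp add: Dprime_0)
    next
      case (Suc n)
      show ?case
      proof
        assume le: "Suc n \<le> T"
        hence IH: "F n \<le> W 1 / 2 * (norm (u - y 0))^2 + (2 / k) * ln (1 + D n)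
                 - W (Suc n) / 2 * (norm (u - y n))^2" using Suc by simp
        have tI: "Suc n \<in> {1..T}" using le by simp
        have ynX: "y n \<in> X" using le by (intro yX) simp
        have xn: "x (Suc n) \<in> X" by (rule xX[OF tI])
        have es: "e (Suc n) \<le> \<sigma>" unfolding e_def using \<sigma>A ynX by simp
        have rb: "s (Suc n) (x (Suc n)) + r (Suc n) (x (Suc n)) - (s (Suc n) u + r (Suc n) u)
           \<le> 2 * (e (Suc n))^2 / W (Suc n) + W (Suc n)/2 * (norm (u - y n))^2
             - (W (Suc n) + \<alpha> / (2 * \<sigma>^2) * (e (Suc n))^2) / 2 * (norm (u - y (Suc n)))^2"
        proof (rule round_bound[OF X rA[rule_format] Wge assms(2) assms(1) assms(3) u])
          show "is_argmin_on X (\<lambda>z. 1 / W (Suc n) * (gsh (Suc n) (y n) \<bullet> z) + 1 / W (Suc n) * r (Suc n) z + breg z (y n)) (x (Suc n))"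
            using amx[OF tI] by simp
          show "is_argmin_on X (\<lambda>z. 1 / W (Suc n) * (gs (Suc n) (x (Suc n)) \<bullet> z) + 1 / W (Suc n) * r (Suc n) z + breg z (y n)) (y (Suc n))"
            using amy[OF tI] by simp
          show "s (Suc n) (x (Suc n)) - s (Suc n) u \<le> gs (Suc n) (x (Suc n)) \<bullet> (x (Suc n) - u) - \<alpha> / 2 * (norm (x (Suc n) - u))\<^sup>2"
            using sA xn u unfolding strongly_convex_grad_def by blast
          show "norm (gs (Suc n) (x (Suc n)) - gs (Suc n) (y n)) \<le> \<beta> * norm (x (Suc n) - y n)"
            using sA unfolding smooth_grad_def by blast
          show "e (Suc n) = norm (gs (Suc n) (y n) - gsh (Suc n) (y n))" unfolding e_def by simp
          show "e (Suc n) \<le> \<sigma>" by (rule es)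
          show "\<alpha> \<le> \<beta> \<or> x (Suc n) = y (Suc n)" using ab xn yX[OF le] by blast
        qed
        have Wn: "W (Suc n) + \<alpha> / (2 * \<sigma>^2) * (e (Suc n))^2 = W (Suc (Suc n))"
          unfolding W_def \<kappa>_def by (simp add: DS add_divide_distrib distrib_left)
        have lg: "2 * (e (Suc n))^2 / W (Suc n) \<le> (2 / k) * (ln (1 + D (Suc n)) - ln (1 + D n))"
        proof -
          have "(e (Suc n))^2 \<le> \<sigma>^2" using es unfolding e_def by (simp add: power_mono)
          from log_step[OF D0 zero_le_power2 this assms(2) \<kappa>p]
          show ?thesis unfolding W_def DS k_def by simp
        qed
        have Fs: "F (Suc n) = F n + (s (Suc n) (x (Suc n)) + r (Suc n) (x (Suc n)) - (s (Suc n) u + r (Suc n) u))"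
          unfolding F_def by simp
        show "F (Suc n) \<le> W 1 / 2 * (norm (u - y 0))^2 + (2 / k) * ln (1 + D (Suc n))
                 - W (Suc (Suc n)) / 2 * (norm (u - y (Suc n)))^2"
          using IH rb[unfolded Wn] lg[unfolded right_diff_distrib] Fs by linarith
      qed
    qed
    have "F T \<le> W 1 / 2 * (norm (u - y 0))^2 + (2 / k) * ln (1 + D T)
                 - W (Suc T) / 2 * (norm (u - y T))^2" using ind by simp
    moreover have "W (Suc T) / 2 * (norm (u - y T))^2 \<ge> 0" using Wge[of "Suc T"] assms(2) by simp
    moreover have "W 1 / 2 * (norm (u - y 0))^2 \<le> 2 * \<beta> * R^2"
    proof -
      have "breg u (y 0) \<le> R^2" using RA u y0 by blast
      hence "(norm (u - y 0))^2 \<le> 2 * R^2" unfolding breg_def by simp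
      thus ?thesis unfolding W1 using assms(2) by simp
    qed
    moreover have L0: "ln (1 + D T) \<ge> 0" using D0[of T] by simp
    moreover have "(\<Sum>t=1..T. s t (x t) + r t (x t)) - (\<Sum>t=1..T. s t u + r t u) = F T"
      unfolding F_def by (simp add: sum_subtractf)
    moreover have "2 * \<beta> * R^2 + (2 / k) * ln (1 + D T) \<le> (2 * \<beta> * R^2 + 2 / k) * (1 + ln (1 + D T))"
      using L0 kp assms by (simp add: algebra_simps)
    ultimately show "(\<Sum>t=1..T. s t (x t) + r t (x t)) - (\<Sum>t=1..T. s t u + r t u)
              \<le> (2 * \<beta> * R^2 + 2 / k) * (1 + ln (1 + Dprime gs gsh y T))"
      unfolding D_def by linarith
  qed
qed

end
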